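(* Let $G$ be a digraph that is not strongly connected, and suppose that $G$ has exactly one strongly connected subdigraph with at least one arc, and that this subdigraph is a directed cycle. Then the sequence of inner diameters $d(G),d(LG),d(L^2G),\dots$ is eventually periodic: there exist $k_0\ge0$ and $p\ge1$ such that $d(L^{k+p}G)=d(L^kG)$ for all $k\ge k_0$.
   Context: Digraphs are finite and may have loops and multiple arcs. The line digraph $LG$ has as vertex set the set of arcs of $G$, with an arc from $e$ to $f$ whenever the head of $e$ equals the tail of $f$; $L^0G=G$, $L^kG=L(L^{k-1}G)$. The inner diameter is $d(G)=\max\{\mathrm{dist}_G(u,v): \mathrm{dist}_G(u,v)<\infty\}$, where $\mathrm{dist}_G(u,v)$ is the length of a shortest directed walk from $u$ to $v$ ($\mathrm{dist}_G(u,u)=0$). A directed cycle is a digraph with vertices $v_0,\dots,v_{n-1}$ ($n\ge1$) and exactly the arcs $(v_i,v_{i+1\bmod n})$. *)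

theory Defs
  imports "Graph_Theory.Graph_Theory"
begin

text \<open>Universal element type closed under pairing, so that iterated line
digraphs stay in one type: arcs of the line digraph are pairs of arcs.\<close>
datatype 'a node = Leaf 'a | Pr "'a node" "'a node"

fun pr_fst :: "'a node \<Rightarrow> 'a node" where
  "pr_fst (Pr e f) = e"
| "pr_fst (Leaf x) = Leaf x"

fun pr_snd :: "'a node \<Rightarrow> 'a node" where
  "pr_snd (Pr e f) = f"
| "pr_snd (Leaf x) = Leaf x"

definition line_digraph :: "('a node, 'a node) pre_digraph \<Rightarrow> ('a node, 'a node) pre_digraph" where
  "line_digraph G = \<lparr> verts = arcs G,
      arcs = {Pr e f | e f. e \<in> arcs G \<and> f \<in> arcs G \<and> head G e = tail G f},
      tail = pr_fst, head = pr_snd \<rparr>"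

definition iter_line_digraph :: "nat \<Rightarrow> ('a node, 'a node) pre_digraph \<Rightarrow> ('a node, 'a node) pre_digraph" where
  "iter_line_digraph k G = (line_digraph ^^ k) G"

text \<open>Distance: length of a shortest directed walk (meaningful when reachable).\<close>
definition digraph_dist :: "('a,'b) pre_digraph \<Rightarrow> 'a \<Rightarrow> 'a \<Rightarrow> nat" where
  "digraph_dist G u v = (LEAST n. \<exists>p. pre_digraph.awalk G u p v \<and> length p = n)"

definition inner_diameter :: "('a,'b) pre_digraph \<Rightarrow> nat" where
  "inner_diameter G = Max {digraph_dist G u v | u v. u \<in> verts G \<and> v \<in> verts G \<and> u \<rightarrow>\<^sup>*\<^bsub>G\<^esub> v}"

definition is_directed_cycle :: "('a,'b) pre_digraph \<Rightarrow> bool" where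
  "is_directed_cycle H \<longleftrightarrow> (\<exists>n::nat. \<exists>v :: nat \<Rightarrow> 'a. \<exists>a :: nat \<Rightarrow> 'b.
     n \<ge> 1 \<and> inj_on v {..<n} \<and> verts H = v ` {..<n} \<and>
     bij_betw a {..<n} (arcs H) \<and>
     (\<forall>i<n. tail H (a i) = v i \<and> head H (a i) = v (Suc i mod n)))"

end

theory Submission
  imports Defs
begin



definition cw :: "('a,'b) pre_digraph \<Rightarrow> 'b list \<Rightarrow> bool" where
  "cw G w \<longleftrightarrow> set w \<subseteq> arcs G \<and> (\<forall>i. Suc i < length w \<longrightarrow> head G (w!i) = tail G (w!Suc i))"

lemma cw_Nil[simp]: "cw G []" by (simp add: cw_def)
lemma cw_single[simp]: "cw G [x] \<longleftrightarrow> x \<in> arcs G" by (simp add: cw_def)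
lemma cw_Cons2[simp]: "cw G (x#y#w) \<longleftrightarrow> x \<in> arcs G \<and> head G x = tail G y \<and> cw G (y#w)"
proof
  assume a: "cw G (x#y#w)"
  have "\<forall>i. Suc i < length (y#w) \<longrightarrow> head G ((y#w)!i) = tail G ((y#w)!Suc i)"
  proof (intro allI impI)
    fix i assume "Suc i < length (y#w)"
    then show "head G ((y#w)!i) = tail G ((y#w)!Suc i)" using a[unfolded cw_def]
      by (metis Suc_less_eq length_Cons nth_Cons_Suc)
  qed
  then show "x \<in> arcs G \<and> head G x = tail G y \<and> cw G (y#w)" using a by (auto simp: cw_def)
next
  assume a: "x \<in> arcs G \<and> head G x = tail G y \<and> cw G (y#w)"
  show "cw G (x#y#w)" unfolding cw_def
  proof (intro conjI allI impI)
    show "set (x#y#w) \<subseteq> arcs G" using a by (auto simp: cw_def)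
    fix i assume "Suc i < length (x#y#w)"
    then show "head G ((x#y#w)!i) = tail G ((x#y#w)!Suc i)" using a[unfolded cw_def]
      by (cases i) auto
  qed
qed

lemma cw_Cons: "cw G (x#w) \<longleftrightarrow> x \<in> arcs G \<and> (w \<noteq> [] \<longrightarrow> head G x = tail G (hd w)) \<and> cw G w"
  by (cases w) auto

lemma cw_append: "cw G (xs@ys) \<longleftrightarrow> cw G xs \<and> cw G ys \<and> (xs \<noteq> [] \<longrightarrow> ys \<noteq> [] \<longrightarrow> head G (last xs) = tail G (hd ys))"
  by (induction xs) (auto simp: cw_Cons)

lemma cw_take: "cw G w \<Longrightarrow> cw G (take i w)"
  by (metis append_take_drop_id cw_append)
lemma cw_drop: "cw G w \<Longrightarrow> cw G (drop i w)"
  by (metis append_take_drop_id cw_append)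
lemma cw_nth: "cw G w \<Longrightarrow> Suc i < length w \<Longrightarrow> head G (w!i) = tail G (w!Suc i)"
  by (simp add: cw_def)
lemma cw_set: "cw G w \<Longrightarrow> i < length w \<Longrightarrow> w!i \<in> arcs G"
  by (auto simp: cw_def)

locale cyc = fin_digraph G for G :: "('a,'b) pre_digraph" +
  fixes C :: "('a,'b) pre_digraph" and n :: nat and vv :: "nat \<Rightarrow> 'a" and a :: "nat \<Rightarrow> 'b"
  assumes subC: "subgraph C G" and scC: "strongly_connected C"
  and uniq: "\<And>H. subgraph H G \<Longrightarrow> strongly_connected H \<Longrightarrow> arcs H \<noteq> {} \<Longrightarrow> H = C"
  and n1: "1 \<le> n" and injv: "inj_on vv {..<n}" and vC: "verts C = vv ` {..<n}"
  and ba: "bij_betw a {..<n} (arcs C)"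
  and ta: "\<And>i. i<n \<Longrightarrow> tail G (a i) = vv i" and ha: "\<And>i. i<n \<Longrightarrow> head G (a i) = vv (Suc i mod n)"
begin

abbreviation "A \<equiv> arcs C"

lemma A_sub: "A \<subseteq> arcs G" using subC by (auto simp: subgraph_def)

lemma onC: assumes e: "e \<in> arcs G" and r: "head G e \<rightarrow>\<^sup>*\<^bsub>G\<^esub> tail G e" shows "e \<in> A"
proof -
  let ?u = "tail G e"
  have u: "?u \<in> verts G" using e by simp
  have "scc_of ?u \<in> sccs_verts" by (rule scc_of_in_sccs_verts[OF u])
  hence H: "G \<restriction> scc_of ?u \<in> sccs" by (rule in_verts_sccsD_sccs)
  have adj: "?u \<rightarrow>\<^bsub>G\<^esub> head G e" using e by (rule in_arcs_imp_in_arcs_ends)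
  have "?u \<in> scc_of ?u" using u by (rule in_scc_of_self)
  moreover have "head G e \<in> scc_of ?u" using adj r unfolding scc_of_def by auto
  ultimately have eH: "e \<in> arcs (G \<restriction> scc_of ?u)" using e by simp
  have "G \<restriction> scc_of ?u = C"
    apply (rule uniq)
    using H eH by (auto intro: induced_imp_subgraph in_sccs_imp_induced elim: in_sccsE)
  with eH show ?thesis by simp
qed

lemma cw_reach: "cw G w \<Longrightarrow> i < j \<Longrightarrow> j < length w \<Longrightarrow> head G (w!i) \<rightarrow>\<^sup>*\<^bsub>G\<^esub> tail G (w!j)"
proof (induction j)
  case 0 then show ?case by simp
next
  case (Suc j)
  show ?case
  proof (cases "i = j")
    case True
    then have "head G (w!i) = tail G (w!Suc j)" using Suc cw_nth by blast
    moreover have "w!i \<in> arcs G" using Suc True cw_set by fastforce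
    ultimately show ?thesis by (metis head_in_verts reachable_refl)
  next
    case False
    then have "head G (w!i) \<rightarrow>\<^sup>*\<^bsub>G\<^esub> tail G (w!j)" using Suc by auto
    moreover have "tail G (w!j) \<rightarrow>\<^bsub>G\<^esub> head G (w!j)"
      using Suc cw_set by (metis Suc_lessD in_arcs_imp_in_arcs_ends)
    moreover have "head G (w!j) = tail G (w!Suc j)" using Suc cw_nth by blast
    ultimately show ?thesis by (metis reachable_adj_trans)
  qed
qed

abbreviation "N \<equiv> card (verts G)"

lemma Afree_len: assumes "cw G w" "\<forall>x\<in>set w. x \<notin> A" shows "length w \<le> N"
proof -
  have d: "distinct (map (tail G) w)"
  proof (rule ccontr)
    assume "\<not> distinct (map (tail G) w)"
    then obtain i j where ij: "i < j" "j < length w" "tail G (w!i) = tail G (w!j)"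
      unfolding distinct_conv_nth by (auto, metis linorder_neqE_nat)
    then have "head G (w!i) \<rightarrow>\<^sup>*\<^bsub>G\<^esub> tail G (w!i)" using cw_reach assms(1) by metis
    then have "w!i \<in> A" using onC cw_set assms(1) ij by (meson less_trans)
    then show False using assms(2) ij by (meson nth_mem less_trans)
  qed
  have "set (map (tail G) w) \<subseteq> verts G" using assms(1) by (auto simp: cw_def)
  then have "card (set (map (tail G) w)) \<le> N" by (simp add: card_mono)
  then show ?thesis using d distinct_card by fastforce
qed

lemma tailC: "x \<in> A \<Longrightarrow> tail G x \<in> verts C"
proof -
  assume "x \<in> A"
  moreover have "wf_digraph C" using subC by (auto simp: subgraph_def)
  moreover have "tail C = tail G" using subC by (auto simp: subgraph_def compatible_def)
  ultimately show ?thesis by (metis wf_digraph.tail_in_verts)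
qed

lemma contig: assumes "cw G w" "i \<le> l" "l \<le> j" "j < length w" "w!i \<in> A" "w!j \<in> A" shows "w!l \<in> A"
proof (cases "l = j")
  case True then show ?thesis using assms by simp
next
  case False
  then have lj: "l < j" using assms by simp
  have r1: "head G (w!l) \<rightarrow>\<^sup>*\<^bsub>G\<^esub> tail G (w!j)" using cw_reach assms lj by blast
  have "tail G (w!j) \<rightarrow>\<^sup>*\<^bsub>C\<^esub> tail G (w!i)" using scC tailC assms(5,6)
    by (auto simp: strongly_connected_def)
  then have r2: "tail G (w!j) \<rightarrow>\<^sup>*\<^bsub>G\<^esub> tail G (w!i)" using reachable_mono subC by blast
  have r3: "tail G (w!i) \<rightarrow>\<^sup>*\<^bsub>G\<^esub> tail G (w!l)"
  proof (cases "i = l")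
    case True then show ?thesis using assms cw_set by (metis less_le_trans tail_in_verts reachable_refl lj less_imp_le)
  next
    case False
    then have "head G (w!i) \<rightarrow>\<^sup>*\<^bsub>G\<^esub> tail G (w!l)" using cw_reach assms lj by simp
    moreover have "tail G (w!i) \<rightarrow>\<^bsub>G\<^esub> head G (w!i)" using assms cw_set
      by (metis in_arcs_imp_in_arcs_ends le_less_trans lj order.strict_trans1)
    ultimately show ?thesis by (metis adj_reachable_trans)
  qed
  have "head G (w!l) \<rightarrow>\<^sup>*\<^bsub>G\<^esub> tail G (w!l)" using r1 r2 r3 reachable_trans by blast
  then show ?thesis using onC assms cw_set lj by (meson less_trans)
qed

end


context cyc begin

definition s :: "'b \<Rightarrow> 'b" where "s x = a (Suc (inv_into {..<n} a x) mod n)"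

lemma inja: "inj_on a {..<n}" using ba by (simp add: bij_betw_def)
lemma A_im: "A = a ` {..<n}" using ba by (simp add: bij_betw_def)

lemma s_a: "j < n \<Longrightarrow> s (a j) = a (Suc j mod n)"
  unfolding s_def using inja by (simp add: inv_into_f_f)

lemma s_pow_a: "j < n \<Longrightarrow> (s^^t) (a j) = a ((j+t) mod n)"
proof (induction t)
  case 0 then show ?case by simp
next
  case (Suc t)
  have "(s^^Suc t) (a j) = s (a ((j+t) mod n))" using Suc by simp
  also have "\<dots> = a (Suc ((j+t) mod n) mod n)" using n1 by (intro s_a) simp
  also have "\<dots> = a ((j + Suc t) mod n)" by (simp add: mod_Suc_eq)
  finally show ?case .
qed

lemma s_n: "x \<in> A \<Longrightarrow> (s^^n) x = x"
  using A_im s_pow_a by auto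

lemma s_pow_A: "x \<in> A \<Longrightarrow> (s^^t) x \<in> A"
  using A_im s_pow_a n1 by auto

lemma s_A: "x \<in> A \<Longrightarrow> s x \<in> A"
  using s_pow_A[of x 1] by simp

lemma s_tail: "x \<in> A \<Longrightarrow> tail G (s x) = head G x"
  using A_im s_a ta ha n1 by auto

lemma s_uniq: assumes "x \<in> A" "y \<in> A" "tail G y = head G x" shows "y = s x"
proof -
  obtain j where j: "j < n" "x = a j" using assms A_im by auto
  obtain j' where j': "j' < n" "y = a j'" using assms A_im by auto
  have "vv j' = vv (Suc j mod n)" using assms j j' ta ha by simp
  then have "j' = Suc j mod n" using injv j' n1 by (auto dest: inj_onD)
  then show ?thesis using j j' s_a by simp
qed

lemma cw_succ: "cw G w \<Longrightarrow> Suc i < length w \<Longrightarrow> w!i \<in> A \<Longrightarrow> w!Suc i \<in> A \<Longrightarrow> w!Suc i = s (w!i)"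
  using s_uniq cw_nth by metis

lemma periodic: assumes "cw G w" "i \<le> j" "j < length w" "\<forall>l. i \<le> l \<and> l \<le> j \<longrightarrow> w!l \<in> A"
  shows "w!j = (s^^(j-i)) (w!i)"
  using assms
proof (induction j)
  case 0 then show ?case by simp
next
  case (Suc j)
  show ?case
  proof (cases "i = Suc j")
    case True then show ?thesis by simp
  next
    case False
    then have ij: "i \<le> j" using Suc by simp
    then have "w!j = (s^^(j-i)) (w!i)" using Suc by simp
    moreover have "w!Suc j = s (w!j)" using Suc ij by (intro cw_succ) auto
    ultimately show ?thesis using ij by (simp add: Suc_diff_le)
  qed
qed

definition rot :: "'b \<Rightarrow> 'b list" where "rot x = map (\<lambda>t. (s^^t) x) [0..<n]"

lemma rot_len[simp]: "length (rot x) = n" by (simp add: rot_def)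
lemma rot_nth: "t < n \<Longrightarrow> rot x ! t = (s^^t) x" by (simp add: rot_def)
lemma rot_ne: "rot x \<noteq> []" using n1 by (simp add: rot_def)
lemma rot_hd: "hd (rot x) = x" using n1 by (simp add: rot_def hd_map upt_conv_Cons)
lemma rot_A: "x \<in> A \<Longrightarrow> set (rot x) \<subseteq> A" by (auto simp: rot_def s_pow_A)

lemma rot_cw: assumes "x \<in> A" shows "cw G (rot x)"
  unfolding cw_def
proof (intro conjI allI impI)
  show "set (rot x) \<subseteq> arcs G" using rot_A assms A_sub by blast
  fix i assume "Suc i < length (rot x)"
  then show "head G (rot x ! i) = tail G (rot x ! Suc i)"
    using assms by (simp add: rot_nth s_tail s_pow_A)
qed

lemma rot_last: assumes "x \<in> A" shows "head G (last (rot x)) = tail G x"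
proof -
  have "last (rot x) = (s^^(n-1)) x" using n1 rot_ne by (simp add: last_conv_nth rot_nth)
  then have "head G (last (rot x)) = tail G (s ((s^^(n-1)) x))" using s_tail s_pow_A assms by simp
  also have "s ((s^^(n-1)) x) = (s^^n) x" using n1 by (metis Suc_diff_1 funpow.simps(2) comp_apply less_le_trans zero_less_one)
  finally show ?thesis using s_n assms by simp
qed

lemma rot_shift: assumes "x \<in> A" shows "rot x @ [x] = x # rot (s x)"
proof -
  have "rot x @ [x] = map (\<lambda>t. (s^^t) x) [0..<Suc n]" using s_n assms by (simp add: rot_def)
  also have "\<dots> = x # map (\<lambda>t. (s^^Suc t) x) [0..<n]"
    by (simp add: map_upt_Suc del: upt_Suc)
  also have "\<dots> = x # rot (s x)" by (simp add: rot_def funpow_Suc_right del: funpow.simps)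
  finally show ?thesis .
qed

end


context cyc begin

definition ins :: "nat \<Rightarrow> 'b list \<Rightarrow> 'b list" where "ins i w = take i w @ rot (w!i) @ drop i w"
definition rem :: "nat \<Rightarrow> 'b list \<Rightarrow> 'b list" where "rem i w = take i w @ drop (i+n) w"

lemma ins_step: assumes "Suc i < length w" "w!i \<in> A" "w!Suc i = s (w!i)"
  shows "ins i w = ins (Suc i) w"
proof -
  have "drop i w = w!i # drop (Suc i) w" using assms by (simp add: Cons_nth_drop_Suc)
  moreover have "take (Suc i) w = take i w @ [w!i]" using assms by (simp add: take_Suc_conv_app_nth)
  ultimately show ?thesis unfolding ins_def using rot_shift[OF assms(2)] assms(3)
    by (metis append.assoc append_Cons append_Nil)
qed

lemma ins_eq: assumes "cw G w" "i \<le> j" "j < length w" "\<forall>l. i \<le> l \<and> l \<le> j \<longrightarrow> w!l \<in> A"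
  shows "ins i w = ins j w"
  using assms
proof (induction j)
  case 0 then show ?case by simp
next
  case (Suc j)
  show ?case
  proof (cases "i = Suc j")
    case True then show ?thesis by simp
  next
    case False
    then have ij: "i \<le> j" using Suc by simp
    then have "ins i w = ins j w" using Suc by simp
    also have "\<dots> = ins (Suc j) w" using Suc ij by (intro ins_step cw_succ) auto
    finally show ?thesis .
  qed
qed

lemma rem_step: assumes "i+n < length w" "w!i = w!(i+n)" shows "rem i w = rem (Suc i) w"
proof -
  have "drop (i+n) w = w!(i+n) # drop (Suc (i+n)) w" using assms by (simp add: Cons_nth_drop_Suc)
  moreover have "take (Suc i) w = take i w @ [w!i]" using assms by (simp add: take_Suc_conv_app_nth)
  ultimately show ?thesis unfolding rem_def using assms by simp
qed

lemma per_n: assumes "cw G w" "l+n < length w" "\<forall>t. l \<le> t \<and> t \<le> l+n \<longrightarrow> w!t \<in> A"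
  shows "w!l = w!(l+n)"
proof -
  have "w!(l+n) = (s^^(l+n-l)) (w!l)" using periodic[OF assms(1), of l "l+n"] assms(2,3) by simp
  then show ?thesis using s_n assms(3) by simp
qed

lemma rem_eq: assumes "cw G w" "i \<le> j" "j+n < length w" "\<forall>l. i \<le> l \<and> l \<le> j+n \<longrightarrow> w!l \<in> A"
  shows "rem i w = rem j w"
  using assms
proof (induction j)
  case 0 then show ?case by simp
next
  case (Suc j)
  show ?case
  proof (cases "i = Suc j")
    case True then show ?thesis by simp
  next
    case False
    then have ij: "i \<le> j" using Suc by simp
    then have "rem i w = rem j w" using Suc by simp
    also have "\<dots> = rem (Suc j) w" using Suc ij by (intro rem_step per_n) auto
    finally show ?thesis .
  qed
qed

lemma cw_ins: assumes "cw G w" "i < length w" "w!i \<in> A" shows "cw G (ins i w)"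
proof -
  have c1: "cw G (rot (w!i) @ drop i w)"
    unfolding cw_append using assms rot_cw rot_last cw_drop rot_ne by (simp add: hd_drop_conv_nth)
  show ?thesis unfolding ins_def cw_append[of G "take i w"]
  proof (intro conjI impI)
    show "cw G (take i w)" using assms cw_take by blast
    show "cw G (rot (w ! i) @ drop i w)" by (rule c1)
    assume "take i w \<noteq> []"
    then have "i > 0" by simp
    then have "take i w = take (i-1) w @ [w!(i-1)]" using assms by (metis Suc_diff_1 Suc_lessD less_trans_Suc take_Suc_conv_app_nth)
    then have "last (take i w) = w!(i-1)" by (metis last_snoc)
    moreover have "head G (w!(i-1)) = tail G (w!i)" using cw_nth[OF assms(1), of "i-1"] assms \<open>i>0\<close> by simp
    ultimately show "head G (last (take i w)) = tail G (hd (rot (w ! i) @ drop i w))"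
      using rot_hd rot_ne by simp
  qed
qed

lemma cw_rem: assumes "cw G w" "i+n < length w" "w!i = w!(i+n)" shows "cw G (rem i w)"
proof -
  have e: "rem i w = take (Suc i) w @ drop (Suc (i+n)) w" using rem_step[OF assms(2,3)] by (simp add: rem_def)
  show ?thesis unfolding e cw_append
  proof (intro conjI impI)
    show "cw G (take (Suc i) w)" "cw G (drop (Suc (i + n)) w)" using assms cw_take cw_drop by blast+
    assume "drop (Suc (i + n)) w \<noteq> []"
    then have "Suc (i+n) < length w" by simp
    then have "head G (w!(i+n)) = tail G (w!Suc(i+n))" using cw_nth assms by blast
    moreover have "last (take (Suc i) w) = w!i" using assms by (simp add: take_Suc_conv_app_nth)
    ultimately show "head G (last (take (Suc i) w)) = tail G (hd (drop (Suc (i + n)) w))"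
      using assms \<open>Suc (i+n) < length w\<close> by (simp add: hd_drop_conv_nth)
  qed
qed

definition fA :: "'b list \<Rightarrow> nat" where "fA w = (LEAST i. i < length w \<and> w!i \<in> A)"

lemma fA_props: assumes "\<exists>i<length w. w!i \<in> A"
  shows "fA w < length w" "w!(fA w) \<in> A" "\<And>i. i < fA w \<Longrightarrow> w!i \<notin> A"
proof -
  from assms obtain i where "i < length w \<and> w!i \<in> A" by blast
  then have "fA w < length w \<and> w!(fA w) \<in> A" unfolding fA_def by (rule LeastI)
  then show "fA w < length w" "w!(fA w) \<in> A" by auto
  fix i assume "i < fA w"
  then show "w!i \<notin> A" using \<open>fA w < length w\<close> unfolding fA_def
    by (metis (mono_tags, lifting) not_less_Least order.strict_trans)
qed

lemma fA_char: assumes "i < length w" "w!i \<in> A" "\<And>j. j < i \<Longrightarrow> w!j \<notin> A" shows "fA w = i"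
  unfolding fA_def
  by (rule Least_equality) (use assms in \<open>auto simp: not_less[symmetric]\<close>)

lemma exA: assumes "cw G w" "N < length w" shows "\<exists>i<length w. w!i \<in> A"
  using Afree_len[OF assms(1)] assms(2) by (metis in_set_conv_nth not_le)

lemma fA_le: assumes "cw G w" "\<exists>i<length w. w!i \<in> A" shows "fA w \<le> N"
proof -
  have "\<forall>x\<in>set (take (fA w) w). x \<notin> A" using fA_props[OF assms(2)]
    by (auto simp: in_set_conv_nth)
  then have "length (take (fA w) w) \<le> N" using Afree_len cw_take assms(1) by blast
  then show ?thesis using fA_props[OF assms(2)] by simp
qed

lemma block: assumes "cw G w" "f \<le> l" "w!f \<in> A" "l + N < length w" shows "w!l \<in> A"
proof (rule ccontr)
  assume nl: "w!l \<notin> A"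
  have "\<forall>x\<in>set (drop l w). x \<notin> A"
  proof
    fix x assume "x \<in> set (drop l w)"
    then obtain j where j: "j < length w - l" "x = w!(l+j)" by (auto simp: in_set_conv_nth)
    show "x \<notin> A"
    proof
      assume "x \<in> A"
      then have "w!l \<in> A" using contig[OF assms(1) assms(2), of "l+j"] j assms by simp
      then show False using nl by simp
    qed
  qed
  then have "length (drop l w) \<le> N" using Afree_len cw_drop assms(1) by blast
  then show False using assms by simp
qed

end



definition Rel :: "('a,'b) pre_digraph \<Rightarrow> nat \<Rightarrow> 'b list \<Rightarrow> 'b list \<Rightarrow> nat \<Rightarrow> bool" where
  "Rel G K u v m \<longleftrightarrow> (\<exists>W. cw G W \<and> length W = K + m \<and> take K W = u \<and> drop m W = v)"

context cyc begin

lemma ins_len[simp]: "i \<le> length w \<Longrightarrow> length (ins i w) = length w + n"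
  by (simp add: ins_def)

lemma ins_nth: assumes "i < length w" "j < length w + n"
  shows "(ins i w)!j = (if j < i then w!j else if j < i+n then (s^^(j-i)) (w!i) else w!(j-n))"
  using assms by (auto simp: ins_def nth_append rot_nth min_def)

lemma ins_A: assumes "i < length w" "w!i \<in> A" "i \<le> j" "j \<le> i+n" shows "(ins i w)!j \<in> A"
proof -
  have "j < length w + n" using assms by simp
  then show ?thesis using assms by (auto simp: ins_nth s_pow_A)
qed

lemma rem_ins: "i \<le> length w \<Longrightarrow> rem i (ins i w) = w"
  by (simp add: rem_def ins_def)

lemma take_ins: assumes "i < K" "K \<le> length w" shows "take (K+n) (ins i w) = ins i (take K w)"
  using assms by (simp add: ins_def take_append drop_take min_def)

lemma drop_ins: assumes "m \<le> j" "j < length w" shows "drop m (ins j w) = ins (j-m) (drop m w)"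
proof -
  have e: "drop m (take j w) = take (j - m) (drop m w)" by (rule drop_take)
  show ?thesis using assms unfolding ins_def by (simp add: e)
qed

lemma take_rem: assumes "i \<le> K" "K \<le> length w" shows "take K (rem i w) = rem i (take (K+n) w)"
  using assms by (simp add: rem_def take_append take_drop min_def)

lemma drop_rem: assumes "m \<le> j" "j < length w" shows "drop m (rem j w) = rem (j-m) (drop m w)"
proof -
  have e: "drop m (take j w) = take (j - m) (drop m w)" by (rule drop_take)
  show ?thesis using assms unfolding rem_def by (simp add: e add.commute)
qed

definition pump :: "'b list \<Rightarrow> 'b list" where "pump w = ins (fA w) w"
definition unpump :: "'b list \<Rightarrow> 'b list" where "unpump w = rem (fA w) w"

lemma pump_ok: assumes "cw G u" "length u = K" "N < K"
  shows "cw G (pump u)" "length (pump u) = K + n" "fA (pump u) = fA u" "unpump (pump u) = u"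
    "\<And>j. j < fA u \<Longrightarrow> (pump u)!j \<notin> A" "fA u < K"
    "\<And>j. fA u \<le> j \<Longrightarrow> j \<le> fA u + n \<Longrightarrow> (pump u)!j \<in> A"
proof -
  have E: "\<exists>i<length u. u!i \<in> A" using exA[OF assms(1)] assms(2,3) by simp
  note F = fA_props[OF E]
  show c: "cw G (pump u)" unfolding pump_def using cw_ins assms F by blast
  show l: "length (pump u) = K + n" unfolding pump_def using F assms by simp
  show "fA u < K" using F assms by simp
  show nA: "\<And>j. j < fA u \<Longrightarrow> (pump u)!j \<notin> A"
    unfolding pump_def using F assms by (subst ins_nth) auto
  show iA: "\<And>j. fA u \<le> j \<Longrightarrow> j \<le> fA u + n \<Longrightarrow> (pump u)!j \<in> A"
    unfolding pump_def using F by (intro ins_A) auto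
  show f: "fA (pump u) = fA u"
    by (rule fA_char) (use l F nA iA assms in auto)
  show "unpump (pump u) = u" unfolding unpump_def f unfolding pump_def using F by (simp add: rem_ins)
qed

lemma unpump_ok: assumes "cw G W" "length W = K + n" "2*N < K"
  shows "cw G (unpump W)" "length (unpump W) = K" "pump (unpump W) = W"
proof -
  have E: "\<exists>i<length W. W!i \<in> A" using exA[OF assms(1)] assms(2,3) by simp
  note F = fA_props[OF E]
  let ?f = "fA W"
  have fN: "?f \<le> N" using fA_le assms E by blast
  have bl: "\<And>l. ?f \<le> l \<Longrightarrow> l \<le> ?f + n \<Longrightarrow> W!l \<in> A"
  proof -
    fix l assume l: "?f \<le> l" "l \<le> ?f + n"
    have "l + N < length W" using l fN assms by linarith
    then show "W!l \<in> A" using block[OF assms(1) l(1) F(2)] by blast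
  qed
  have lt: "?f + n < length W" using fN assms by simp
  have pe: "W!?f = W!(?f+n)" using per_n[OF assms(1) lt] bl by auto
  show c: "cw G (unpump W)" unfolding unpump_def using cw_rem[OF assms(1) lt pe] .
  show l: "length (unpump W) = K" unfolding unpump_def rem_def using lt assms by simp
  have n1': "(unpump W)!?f = W!?f" unfolding unpump_def rem_def using lt pe by (simp add: nth_append min_def)
  have fu: "fA (unpump W) = ?f"
  proof (rule fA_char)
    show "?f < length (unpump W)" using l fN assms by simp
    show "unpump W ! ?f \<in> A" using n1' F by simp
    fix j assume "j < ?f" then show "unpump W ! j \<notin> A" using F lt
      unfolding unpump_def rem_def by (simp add: nth_append)
  qed
  have seg: "take n (drop ?f W) = rot (W!?f)"
  proof (rule nth_equalityI)
    show "length (take n (drop ?f W)) = length (rot (W!?f))" using lt by simp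
    fix t assume "t < length (take n (drop ?f W))"
    then have t: "t < n" by simp
    have "W!(?f+t) = (s^^(?f+t-?f)) (W!?f)" using periodic[OF assms(1), of ?f "?f+t"] bl t lt by simp
    then show "take n (drop ?f W) ! t = rot (W ! ?f) ! t" using t lt by (simp add: rot_nth)
  qed
  have "pump (unpump W) = take ?f W @ rot (W!?f) @ drop (?f+n) W"
    unfolding pump_def fu unfolding ins_def n1'[symmetric] unfolding unpump_def rem_def
    using lt by (simp add: min_def)
  also have "\<dots> = take ?f W @ take n (drop ?f W) @ drop n (drop ?f W)" using seg by (simp add: add.commute)
  also have "\<dots> = W" by (metis append_take_drop_id)
  finally show "pump (unpump W) = W" .
qed

end


context cyc begin

lemma rel_pump: assumes u: "cw G u" "length u = K" and v: "cw G v" "length v = K" and K: "2*N < K"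
  shows "Rel G K u v m \<longleftrightarrow> Rel G (K+n) (pump u) (pump v) m"
proof -
  have NK: "N < K" using K by simp
  note Pu = pump_ok[OF u NK] and Pv = pump_ok[OF v NK]
  have Fu: "u!fA u \<in> A" "\<And>j. j < fA u \<Longrightarrow> u!j \<notin> A"
    using fA_props[OF exA[OF u(1)]] u NK by auto
  have Fv: "v!fA v \<in> A"
    using fA_props[OF exA[OF v(1)]] v NK by auto
  let ?f = "fA u" and ?g = "fA v"
  show ?thesis
  proof
    assume "Rel G K u v m"
    then obtain W where W: "cw G W" "length W = K+m" "take K W = u" "drop m W = v"
      unfolding Rel_def by blast
    have Wu: "\<And>j. j < K \<Longrightarrow> W!j = u!j" using W by auto
    have Wv: "\<And>j. j < K \<Longrightarrow> W!(m+j) = v!j" using W by auto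
    have WfA: "W!?f \<in> A" using Wu Fu Pu(6) by simp
    have WgA: "W!(m+?g) \<in> A" using Wv Fv Pv(6) by simp
    have fg: "?f \<le> m + ?g"
    proof (rule ccontr)
      assume "\<not> ?f \<le> m + ?g"
      then have "W!(m+?g) = u!(m+?g)" "m + ?g < ?f" using Wu Pu(6) by auto
      then show False using Fu(2) WgA by simp
    qed
    have blk: "\<forall>l. ?f \<le> l \<and> l \<le> m + ?g \<longrightarrow> W!l \<in> A"
      using contig[OF W(1) _ _ _ WfA WgA] W(2) Pv(6) by auto
    define W' where "W' = ins ?f W"
    have c: "cw G W'" unfolding W'_def using cw_ins W(1) WfA Pu(6) W(2) by simp
    have l: "length W' = (K+n)+m" unfolding W'_def using W(2) Pu(6) by simp
    have t: "take (K+n) W' = pump u" unfolding W'_def pump_def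
      using take_ins[of ?f K W] Pu(6) W by simp
    have "W' = ins (m+?g) W" unfolding W'_def using ins_eq[OF W(1) fg] blk W(2) Pv(6) by simp
    then have d: "drop m W' = pump v" unfolding pump_def
      using drop_ins[of m "m+?g" W] W Pv(6) by simp
    show "Rel G (K+n) (pump u) (pump v) m" unfolding Rel_def using c l t d by blast
  next
    assume "Rel G (K+n) (pump u) (pump v) m"
    then obtain W' where W': "cw G W'" "length W' = (K+n)+m" "take (K+n) W' = pump u" "drop m W' = pump v"
      unfolding Rel_def by blast
    have Wu: "\<And>j. j < K+n \<Longrightarrow> W'!j = (pump u)!j" using W' by (metis nth_take)
    have Wv: "\<And>j. j < K+n \<Longrightarrow> W'!(m+j) = (pump v)!j" using W' by (metis add.commute le_add2 nth_drop)
    have WfA: "W'!?f \<in> A" using Wu Pu(6,7) by simp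
    have WgA: "W'!(m+?g) \<in> A" using Wv Pv(6,7) by simp
    have WgnA: "W'!(m+?g+n) \<in> A" using Wv[of "?g+n"] Pv(6,7) by (simp add: add.assoc)
    have fg: "?f \<le> m + ?g"
    proof (rule ccontr)
      assume "\<not> ?f \<le> m + ?g"
      then have "W'!(m+?g) = (pump u)!(m+?g)" "m + ?g < ?f" using Wu Pu(6) by auto
      then show False using Pu(5) WgA by simp
    qed
    have blk: "\<forall>l. ?f \<le> l \<and> l \<le> m + ?g + n \<longrightarrow> W'!l \<in> A"
      using contig[OF W'(1) _ _ _ WfA WgnA] W'(2) Pv(6) by auto
    have lt: "?f + n < length W'" using W'(2) Pu(6) by simp
    have pe: "W'!?f = W'!(?f+n)" using per_n[OF W'(1) lt] blk fg by auto
    define W where "W = rem ?f W'"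
    have c: "cw G W" unfolding W_def using cw_rem[OF W'(1) lt pe] .
    have l: "length W = K+m" unfolding W_def rem_def using lt W'(2) by simp
    have "take K W = rem ?f (take (K+n) W')" unfolding W_def using take_rem[of ?f K W'] Pu(6) W'(2) by simp
    also have "\<dots> = u" using W'(3) Pu(3,4) by (simp add: unpump_def)
    finally have t: "take K W = u" .
    have "W = rem (m+?g) W'" unfolding W_def using rem_eq[OF W'(1) fg] blk W'(2) Pv(6) by simp
    then have "drop m W = rem ?g (drop m W')" using drop_rem[of m "m+?g" W'] W'(2) Pv(6) by simp
    also have "\<dots> = v" using W'(4) Pv(3,4) by (simp add: unpump_def)
    finally have d: "drop m W = v" .
    show "Rel G K u v m" unfolding Rel_def using c l t d by blast
  qed
qed

end



primrec enc :: "nat \<Rightarrow> 'x node list \<Rightarrow> 'x node" where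
  "enc 0 w = hd w"
| "enc (Suc k) w = Pr (enc k (butlast w)) (enc k (tl w))"

definition WL :: "('a,'b) pre_digraph \<Rightarrow> nat \<Rightarrow> 'b list set" where
  "WL G k = {w. cw G w \<and> length w = Suc k}"

lemma cw_butlast: "cw G w \<Longrightarrow> cw G (butlast w)" by (simp add: butlast_conv_take cw_take)
lemma cw_tl: "cw G w \<Longrightarrow> cw G (tl w)" by (metis cw_drop drop_Suc drop_0)

lemma bt_eq: assumes "length u = length v" "2 \<le> length u" "butlast u = butlast v" "tl u = tl v" shows "u = v"
proof -
  obtain x u' where u0: "u = x # u'" using assms(2) by (cases u) auto
  then have u: "u = x # u'" "u' \<noteq> []" using assms(2) by auto
  obtain y v' where v: "v = y # v'" using assms(1,2) by (cases v) auto
  have "u' = v'" using assms u v by simp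
  then show ?thesis using assms u v by simp
qed

lemma enc_inj: "length u = Suc k \<Longrightarrow> length v = Suc k \<Longrightarrow> enc k u = enc k v \<Longrightarrow> u = v"
proof (induction k arbitrary: u v)
  case 0
  have "u = [hd u]" using 0 by (cases u) auto
  moreover have "v = [hd v]" using 0 by (cases v) auto
  ultimately show ?case using 0 by (metis enc.simps(1))
next
  case (Suc k)
  have e: "enc k (butlast u) = enc k (butlast v)" "enc k (tl u) = enc k (tl v)" using Suc.prems(3) by simp_all
  have "butlast u = butlast v" using Suc.IH[OF _ _ e(1)] Suc.prems(1,2) by simp
  moreover have "tl u = tl v" using Suc.IH[OF _ _ e(2)] Suc.prems(1,2) by simp
  ultimately show ?case using bt_eq[of u v] Suc.prems(1,2) by simp
qed

lemma L1: assumes "cw G u" "cw G u'" "length u' = length u" "2 \<le> length u"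
  shows "(\<exists>w. cw G w \<and> length w = Suc (length u) \<and> butlast w = u \<and> tl w = u') \<longleftrightarrow> tl u = butlast u'"
proof
  assume "\<exists>w. cw G w \<and> length w = Suc (length u) \<and> butlast w = u \<and> tl w = u'"
  then obtain w where "butlast w = u" "tl w = u'" by blast
  then show "tl u = butlast u'" using butlast_tl[of w] by simp
next
  assume h: "tl u = butlast u'"
  obtain x u1 where u1: "u = x # u1" using assms(4) by (cases u) auto
  obtain y r where u2: "u1 = y # r" using assms(4) u1 by (cases u1) auto
  have u: "u = x # y # r" using u1 u2 by simp
  have ne: "u' \<noteq> []" using assms(3,4) by auto
  have "u' = butlast u' @ [last u']" using ne by simp
  also have "butlast u' = y # r" using h u by simp
  finally obtain z where u': "u' = (y # r) @ [z]" by blast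
  let ?w = "x # u'"
  have "cw G ?w" using assms(1,2) u u' by simp
  moreover have "tl ?w = u'" "butlast ?w = u" "length ?w = Suc (length u)" using u u' by auto
  ultimately show "\<exists>w. cw G w \<and> length w = Suc (length u) \<and> butlast w = u \<and> tl w = u'" by blast
qed

lemma iter_Suc: "iter_line_digraph (Suc k) G = line_digraph (iter_line_digraph k G)"
  by (simp add: iter_line_digraph_def)

lemma iter_0: "iter_line_digraph 0 G = G"
  by (simp add: iter_line_digraph_def)

lemma struct: fixes G :: "('x node, 'x node) pre_digraph"
  shows "verts (iter_line_digraph (Suc k) G) = enc k ` WL G k \<and>
   (\<forall>u\<in>WL G k. \<forall>u'\<in>WL G k. head (iter_line_digraph k G) (enc k u) = tail (iter_line_digraph k G) (enc k u')
       \<longleftrightarrow> (\<exists>w\<in>WL G (Suc k). butlast w = u \<and> tl w = u'))"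
proof (induction k)
  case 0
  have v: "verts (iter_line_digraph (Suc 0) G) = enc 0 ` WL G 0"
  proof -
    have "WL G 0 = (\<lambda>e. [e]) ` arcs G" unfolding WL_def
      by (auto simp: length_Suc_conv)
    then show ?thesis by (simp add: iter_Suc iter_0 line_digraph_def image_image)
  qed
  have "\<forall>u\<in>WL G 0. \<forall>u'\<in>WL G 0. head G (hd u) = tail G (hd u')
       \<longleftrightarrow> (\<exists>w\<in>WL G (Suc 0). butlast w = u \<and> tl w = u')"
  proof (intro ballI)
    fix u u' assume "u \<in> WL G 0" "u' \<in> WL G 0"
    then obtain e f where ef: "u = [e]" "u' = [f]" "e \<in> arcs G" "f \<in> arcs G"
      unfolding WL_def by (auto simp: length_Suc_conv)
    show "head G (hd u) = tail G (hd u') \<longleftrightarrow> (\<exists>w\<in>WL G (Suc 0). butlast w = u \<and> tl w = u')"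
    proof
      assume "head G (hd u) = tail G (hd u')"
      then have "[e,f] \<in> WL G (Suc 0)" using ef by (simp add: WL_def)
      then show "\<exists>w\<in>WL G (Suc 0). butlast w = u \<and> tl w = u'" using ef by force
    next
      assume "\<exists>w\<in>WL G (Suc 0). butlast w = u \<and> tl w = u'"
      then obtain w where w: "w \<in> WL G (Suc 0)" "butlast w = u" "tl w = u'" by blast
      then obtain x y where "w = [x,y]" unfolding WL_def by (auto simp: length_Suc_conv)
      then show "head G (hd u) = tail G (hd u')" using w ef by (simp add: WL_def)
    qed
  qed
  then show ?case using v by (simp add: iter_0)
next
  case (Suc k)
  let ?H = "iter_line_digraph k G"
  have IH1: "verts (iter_line_digraph (Suc k) G) = enc k ` WL G k" using Suc by blast
  have IH2: "\<And>u u'. u\<in>WL G k \<Longrightarrow> u'\<in>WL G k \<Longrightarrow> head ?H (enc k u) = tail ?H (enc k u')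
       \<longleftrightarrow> (\<exists>w\<in>WL G (Suc k). butlast w = u \<and> tl w = u')" using Suc by blast
  have arcsH: "arcs ?H = enc k ` WL G k" using IH1 by (simp add: iter_Suc line_digraph_def)
  have bt: "\<And>w. w \<in> WL G (Suc k) \<Longrightarrow> butlast w \<in> WL G k \<and> tl w \<in> WL G k"
    by (auto simp: WL_def cw_butlast cw_tl)
  have v: "verts (iter_line_digraph (Suc (Suc k)) G) = enc (Suc k) ` WL G (Suc k)"
  proof -
    have "verts (iter_line_digraph (Suc (Suc k)) G) =
      {Pr e f | e f. e \<in> arcs ?H \<and> f \<in> arcs ?H \<and> head ?H e = tail ?H f}"
      by (simp add: iter_Suc line_digraph_def)
    also have "\<dots> = enc (Suc k) ` WL G (Suc k)"
    proof (intro set_eqI iffI)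
      fix x assume "x \<in> {Pr e f | e f. e \<in> arcs ?H \<and> f \<in> arcs ?H \<and> head ?H e = tail ?H f}"
      then obtain u u' where uu: "u \<in> WL G k" "u' \<in> WL G k" "x = Pr (enc k u) (enc k u')"
        "head ?H (enc k u) = tail ?H (enc k u')" using arcsH by auto
      then obtain w where w: "w\<in>WL G (Suc k)" "butlast w = u" "tl w = u'" using IH2 by blast
      then show "x \<in> enc (Suc k) ` WL G (Suc k)" using uu by auto
    next
      fix x assume "x \<in> enc (Suc k) ` WL G (Suc k)"
      then obtain w where w: "w \<in> WL G (Suc k)" "x = enc (Suc k) w" by blast
      have "head ?H (enc k (butlast w)) = tail ?H (enc k (tl w))" using IH2 bt w by blast
      then show "x \<in> {Pr e f | e f. e \<in> arcs ?H \<and> f \<in> arcs ?H \<and> head ?H e = tail ?H f}"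
        using w bt arcsH by auto
    qed
    finally show ?thesis .
  qed
  have "\<forall>u\<in>WL G (Suc k). \<forall>u'\<in>WL G (Suc k).
     head (iter_line_digraph (Suc k) G) (enc (Suc k) u) = tail (iter_line_digraph (Suc k) G) (enc (Suc k) u')
       \<longleftrightarrow> (\<exists>w\<in>WL G (Suc (Suc k)). butlast w = u \<and> tl w = u')"
  proof (intro ballI)
    fix u u' assume uu: "u \<in> WL G (Suc k)" "u' \<in> WL G (Suc k)"
    have "head (iter_line_digraph (Suc k) G) (enc (Suc k) u) = tail (iter_line_digraph (Suc k) G) (enc (Suc k) u')
       \<longleftrightarrow> enc k (tl u) = enc k (butlast u')" by (simp add: iter_Suc line_digraph_def)
    also have "\<dots> \<longleftrightarrow> tl u = butlast u'"
      using enc_inj[of "tl u" k "butlast u'"] uu by (auto simp: WL_def)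
    also have "\<dots> \<longleftrightarrow> (\<exists>w. cw G w \<and> length w = Suc (length u) \<and> butlast w = u \<and> tl w = u')"
      using L1[of G u u'] uu by (auto simp: WL_def)
    also have "\<dots> \<longleftrightarrow> (\<exists>w\<in>WL G (Suc (Suc k)). butlast w = u \<and> tl w = u')"
      using uu by (auto simp: WL_def)
    finally show "head (iter_line_digraph (Suc k) G) (enc (Suc k) u) = tail (iter_line_digraph (Suc k) G) (enc (Suc k) u')
       \<longleftrightarrow> (\<exists>w\<in>WL G (Suc (Suc k)). butlast w = u \<and> tl w = u')" .
  qed
  then show ?case using v by blast
qed




lemma wf_line: "wf_digraph H \<Longrightarrow> wf_digraph (line_digraph H)"
  unfolding wf_digraph_def line_digraph_def by auto

lemma wf_iter: "wf_digraph G \<Longrightarrow> wf_digraph (iter_line_digraph k G)"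
  by (induction k) (auto simp: iter_0 iter_Suc wf_line)

lemma L2: assumes "u \<in> WL G k"
  shows "(\<exists>w\<in>WL G (Suc k). butlast w = u \<and> Rel G (Suc k) (tl w) v m) \<longleftrightarrow> Rel G (Suc k) u v (Suc m)"
proof
  assume "\<exists>w\<in>WL G (Suc k). butlast w = u \<and> Rel G (Suc k) (tl w) v m"
  then obtain w W' where w: "cw G w" "length w = Suc (Suc k)" "butlast w = u"
    and W': "cw G W'" "length W' = Suc k + m" "take (Suc k) W' = tl w" "drop m W' = v"
    unfolding WL_def Rel_def by blast
  obtain x w' where xw: "w = x # w'" using w(2) by (cases w) auto
  have w'ne: "w' \<noteq> []" using w(2) xw by auto
  have hdW: "hd W' = hd w'"
  proof -
    have "W' = take (Suc k) W' @ drop (Suc k) W'" by simp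
    then have "hd W' = hd (take (Suc k) W')" using W'(3) xw w'ne by (metis hd_append list.sel(3))
    then show ?thesis using W'(3) xw by simp
  qed
  let ?W = "x # W'"
  have "cw G ?W" unfolding cw_Cons using w(1) xw W'(1) hdW w'ne by (simp add: cw_Cons)
  moreover have "length ?W = Suc k + Suc m" using W'(2) by simp
  moreover have "take (Suc k) ?W = u"
  proof -
    have "take (Suc k) ?W = x # take k W'" by simp
    also have "take k W' = butlast (take (Suc k) W')" using W'(2) by (simp add: butlast_take)
    also have "\<dots> = butlast w'" using W'(3) xw by simp
    finally show ?thesis using w(3) xw w'ne by simp
  qed
  moreover have "drop (Suc m) ?W = v" using W'(4) by simp
  ultimately show "Rel G (Suc k) u v (Suc m)" unfolding Rel_def by blast
next
  assume "Rel G (Suc k) u v (Suc m)"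
  then obtain W where W: "cw G W" "length W = Suc k + Suc m" "take (Suc k) W = u" "drop (Suc m) W = v"
    unfolding Rel_def by blast
  let ?w = "take (Suc (Suc k)) W"
  have "?w \<in> WL G (Suc k)" using W by (simp add: WL_def cw_take)
  moreover have "butlast ?w = u" using W by (simp add: butlast_take)
  moreover have "Rel G (Suc k) (tl ?w) v m"
    unfolding Rel_def
    by (rule exI[of _ "tl W"]) (use W in \<open>simp add: cw_tl drop_Suc tl_take\<close>)
  ultimately show "\<exists>w\<in>WL G (Suc k). butlast w = u \<and> Rel G (Suc k) (tl w) v m" by blast
qed

lemma walk_rel: fixes G :: "('x node, 'x node) pre_digraph"
  assumes wf: "wf_digraph G" and u: "u \<in> WL G k" and v: "v \<in> WL G k"
  shows "(\<exists>p. pre_digraph.awalk (iter_line_digraph (Suc k) G) (enc k u) p (enc k v) \<and> length p = m)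
    \<longleftrightarrow> Rel G (Suc k) u v m"
  using u
proof (induction m arbitrary: u)
  case 0
  interpret H: wf_digraph "iter_line_digraph (Suc k) G" using wf_iter wf by blast
  have vv: "verts (iter_line_digraph (Suc k) G) = enc k ` WL G k" using struct by blast
  have "(\<exists>p. pre_digraph.awalk (iter_line_digraph (Suc k) G) (enc k u) p (enc k v) \<and> length p = 0)
     \<longleftrightarrow> enc k u = enc k v" using 0 vv by (auto simp: H.awalk_Nil_iff)
  also have "\<dots> \<longleftrightarrow> u = v" using enc_inj 0 v by (auto simp: WL_def)
  also have "\<dots> \<longleftrightarrow> Rel G (Suc k) u v 0" using 0 by (auto simp: Rel_def WL_def)
  finally show ?case .
next
  case (Suc m)
  let ?H = "iter_line_digraph (Suc k) G"
  interpret H: wf_digraph ?H using wf_iter wf by blast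
  have arcsH: "arcs ?H = enc (Suc k) ` WL G (Suc k)"
    using struct[of "Suc k" G] by (simp add: iter_Suc line_digraph_def)
  have th: "tail ?H = pr_fst" "head ?H = pr_snd" by (simp_all add: iter_Suc line_digraph_def)
  have bt: "\<And>w. w \<in> WL G (Suc k) \<Longrightarrow> butlast w \<in> WL G k \<and> tl w \<in> WL G k"
    by (auto simp: WL_def cw_butlast cw_tl)
  have "(\<exists>p. pre_digraph.awalk ?H (enc k u) p (enc k v) \<and> length p = Suc m)
     \<longleftrightarrow> (\<exists>e p. pre_digraph.awalk ?H (enc k u) (e#p) (enc k v) \<and> length p = m)"
    by (metis length_Suc_conv)
  also have "\<dots> \<longleftrightarrow> (\<exists>e\<in>arcs ?H. enc k u = tail ?H e \<and> (\<exists>p. pre_digraph.awalk ?H (head ?H e) p (enc k v) \<and> length p = m))"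
    by (auto simp: H.awalk_Cons_iff)
  also have "\<dots> \<longleftrightarrow> (\<exists>w\<in>WL G (Suc k). butlast w = u \<and> (\<exists>p. pre_digraph.awalk ?H (enc k (tl w)) p (enc k v) \<and> length p = m))"
  proof -
    have "\<And>w. w \<in> WL G (Suc k) \<Longrightarrow> enc k u = enc k (butlast w) \<longleftrightarrow> butlast w = u"
    proof -
      fix w assume w: "w \<in> WL G (Suc k)"
      have "length (butlast w) = Suc k" "length u = Suc k" using w Suc.prems by (auto simp: WL_def)
      then show "enc k u = enc k (butlast w) \<longleftrightarrow> butlast w = u" using enc_inj[of u k "butlast w"] by auto
    qed
    then show ?thesis unfolding arcsH th by auto
  qed
  also have "\<dots> \<longleftrightarrow> (\<exists>w\<in>WL G (Suc k). butlast w = u \<and> Rel G (Suc k) (tl w) v m)"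
    using Suc.IH bt by blast
  also have "\<dots> \<longleftrightarrow> Rel G (Suc k) u v (Suc m)" using L2 Suc.prems by blast
  finally show ?case .
qed

definition DS :: "('a,'b) pre_digraph \<Rightarrow> nat \<Rightarrow> nat set" where
  "DS G K = {LEAST m. Rel G K u v m | u v. cw G u \<and> length u = K \<and> cw G v \<and> length v = K \<and> (\<exists>m. Rel G K u v m)}"

lemma diam_DS: fixes G :: "('x node, 'x node) pre_digraph"
  assumes wf: "wf_digraph G"
  shows "inner_diameter (iter_line_digraph (Suc k) G) = Max (DS G (Suc k))"
proof -
  let ?H = "iter_line_digraph (Suc k) G"
  interpret H: wf_digraph ?H using wf_iter wf by blast
  have vv: "verts ?H = enc k ` WL G k" using struct by blast
  have dd: "\<And>u v. u \<in> WL G k \<Longrightarrow> v \<in> WL G k \<Longrightarrow> digraph_dist ?H (enc k u) (enc k v) = (LEAST m. Rel G (Suc k) u v m)"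
  proof -
    fix u v assume uv: "u \<in> WL G k" "v \<in> WL G k"
    have e: "\<And>m. (\<exists>p. pre_digraph.awalk ?H (enc k u) p (enc k v) \<and> length p = m) = Rel G (Suc k) u v m"
      using walk_rel[OF wf uv] by blast
    show "digraph_dist ?H (enc k u) (enc k v) = (LEAST m. Rel G (Suc k) u v m)"
      unfolding digraph_dist_def e ..
  qed
  have rr: "\<And>u v. u \<in> WL G k \<Longrightarrow> v \<in> WL G k \<Longrightarrow> (enc k u \<rightarrow>\<^sup>*\<^bsub>?H\<^esub> enc k v) \<longleftrightarrow> (\<exists>m. Rel G (Suc k) u v m)"
    unfolding H.reachable_awalk using walk_rel[OF wf] by blast
  have "{digraph_dist ?H x y | x y. x \<in> verts ?H \<and> y \<in> verts ?H \<and> x \<rightarrow>\<^sup>*\<^bsub>?H\<^esub> y} = DS G (Suc k)"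
  proof (intro set_eqI iffI)
    fix d assume "d \<in> {digraph_dist ?H x y | x y. x \<in> verts ?H \<and> y \<in> verts ?H \<and> x \<rightarrow>\<^sup>*\<^bsub>?H\<^esub> y}"
    then obtain u v where "u \<in> WL G k" "v \<in> WL G k" "d = digraph_dist ?H (enc k u) (enc k v)"
      "enc k u \<rightarrow>\<^sup>*\<^bsub>?H\<^esub> enc k v" using vv by auto
    then show "d \<in> DS G (Suc k)" using dd rr unfolding DS_def by (auto simp: WL_def)
  next
    fix d assume "d \<in> DS G (Suc k)"
    then obtain u v where "u \<in> WL G k" "v \<in> WL G k" "d = (LEAST m. Rel G (Suc k) u v m)" "\<exists>m. Rel G (Suc k) u v m"
      unfolding DS_def WL_def by auto
    then have "d = digraph_dist ?H (enc k u) (enc k v) \<and> enc k u \<in> verts ?H \<and> enc k v \<in> verts ?H \<and> enc k u \<rightarrow>\<^sup>*\<^bsub>?H\<^esub> enc k v"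
      using dd rr vv by auto
    then show "d \<in> {digraph_dist ?H x y | x y. x \<in> verts ?H \<and> y \<in> verts ?H \<and> x \<rightarrow>\<^sup>*\<^bsub>?H\<^esub> y}"
      by blast
  qed
  then show ?thesis unfolding inner_diameter_def by simp
qed




context cyc begin
lemma DS_pump: assumes K: "2*N < K" shows "DS G (K+n) = DS G K"
proof (intro set_eqI iffI)
  fix d assume "d \<in> DS G (K+n)"
  then obtain u' v' where h: "cw G u'" "length u' = K+n" "cw G v'" "length v' = K+n"
    "\<exists>m. Rel G (K+n) u' v' m" "d = (LEAST m. Rel G (K+n) u' v' m)" unfolding DS_def by blast
  note U = unpump_ok[OF h(1,2) K] and V = unpump_ok[OF h(3,4) K]
  have e: "\<And>m. Rel G K (unpump u') (unpump v') m \<longleftrightarrow> Rel G (K+n) u' v' m"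
    using rel_pump[OF U(1,2) V(1,2) K] U(3) V(3) by simp
  have d': "d = (LEAST m. Rel G K (unpump u') (unpump v') m)" using h(6) e by simp
  have ex': "\<exists>m. Rel G K (unpump u') (unpump v') m" using h(5) e by simp
  show "d \<in> DS G K" unfolding DS_def using d' ex' U(1,2) V(1,2) by blast
next
  fix d assume "d \<in> DS G K"
  then obtain u v where h: "cw G u" "length u = K" "cw G v" "length v = K"
    "\<exists>m. Rel G K u v m" "d = (LEAST m. Rel G K u v m)" unfolding DS_def by blast
  have NK: "N < K" using K by simp
  note U = pump_ok[OF h(1,2) NK] and V = pump_ok[OF h(3,4) NK]
  have e: "\<And>m. Rel G K u v m \<longleftrightarrow> Rel G (K+n) (pump u) (pump v) m"
    using rel_pump[OF h(1-4) K] by simp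
  have d': "d = (LEAST m. Rel G (K+n) (pump u) (pump v) m)" using h(6) e by simp
  have ex': "\<exists>m. Rel G (K+n) (pump u) (pump v) m" using h(5) e by simp
  show "d \<in> DS G (K+n)" unfolding DS_def using d' ex' U(1,2) V(1,2) by blast
qed
end

theorem proposition3p1:
  fixes G :: "('a node, 'a node) pre_digraph"
  assumes "fin_digraph G"
    and "\<not> strongly_connected G"
    and "\<exists>!H. subgraph H G \<and> strongly_connected H \<and> arcs H \<noteq> {}"
    and "\<forall>H. subgraph H G \<and> strongly_connected H \<and> arcs H \<noteq> {} \<longrightarrow> is_directed_cycle H"
  shows "\<exists>k0 p. p \<ge> 1 \<and> (\<forall>k\<ge>k0.
           inner_diameter (iter_line_digraph (k + p) G) = inner_diameter (iter_line_digraph k G))"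
proof -
  obtain C where C: "subgraph C G" "strongly_connected C" "arcs C \<noteq> {}"
    and uq: "\<And>H. subgraph H G \<Longrightarrow> strongly_connected H \<Longrightarrow> arcs H \<noteq> {} \<Longrightarrow> H = C"
  proof -
    from assms(3) obtain C where "subgraph C G \<and> strongly_connected C \<and> arcs C \<noteq> {}"
      "\<And>H. subgraph H G \<and> strongly_connected H \<and> arcs H \<noteq> {} \<Longrightarrow> H = C" by blast
    then show ?thesis using that by blast
  qed
  have "is_directed_cycle C" using assms(4) C by blast
  then obtain n vv a where cyc: "n \<ge> 1" "inj_on vv {..<n}" "verts C = vv ` {..<n}"
     "bij_betw a {..<n} (arcs C)" "\<forall>i<n. tail C (a i) = vv i \<and> head C (a i) = vv (Suc i mod n)"
    unfolding is_directed_cycle_def by blast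
  have tc: "tail C = tail G" "head C = head G" using C(1) by (auto simp: subgraph_def compatible_def)
  have wf: "wf_digraph G" using assms(1) unfolding fin_digraph_def by blast
  have L: "cyc G C n vv a"
    unfolding cyc_def cyc_axioms_def
  proof (intro conjI allI impI)
    show "fin_digraph G" by fact
    show "subgraph C G" "strongly_connected C" by (fact C(1), fact C(2))
    show "\<And>H. subgraph H G \<Longrightarrow> strongly_connected H \<Longrightarrow> arcs H \<noteq> {} \<Longrightarrow> H = C" by (rule uq)
    show "1 \<le> n" "inj_on vv {..<n}" "verts C = vv ` {..<n}" "bij_betw a {..<n} (arcs C)" using cyc by auto
    show "\<And>i. i < n \<Longrightarrow> tail G (a i) = vv i" "\<And>i. i < n \<Longrightarrow> head G (a i) = vv (Suc i mod n)"
      using cyc(5) tc by auto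
  qed
  let ?N = "card (verts G)"
  show ?thesis
  proof (intro exI conjI allI impI)
    show "1 \<le> n" by fact
    fix k assume k: "Suc (2 * ?N) \<le> k"
    then obtain k' where k': "k = Suc k'" by (cases k) auto
    have "inner_diameter (iter_line_digraph (k + n) G) = Max (DS G (k+n))"
      using diam_DS[OF wf, of "k'+n"] k' by simp
    also have "DS G (k+n) = DS G k" using cyc.DS_pump[OF L] k by simp
    also have "Max (DS G k) = inner_diameter (iter_line_digraph k G)"
      using diam_DS[OF wf, of k'] k' by simp
    finally show "inner_diameter (iter_line_digraph (k + n) G) = inner_diameter (iter_line_digraph k G)" .
  qed
qed



end
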